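(* Let $p,n\in\mathbb N$ with $p\ge n\ge 10$, and write $p=k(n-1)+r$ with $k\in\mathbb N$ and $r\in\{0,1,\ldots,n-2\}$. Let $T_n$ be a tree on $n$ vertices with $\Delta(T_n)=n-4$, and let $G\in\mathrm{Ex}(p;T_n)$. If $G$ is connected and $\Delta(G)\le n-4$, then $$p\le \min\Big\{\frac{3(n-1+r)+((-1)^n+(-1)^r)/2}2,\ \frac{r(n-1-r)}2\Big\},$$ and in particular $p\le 2n-7$.
   Context: All graphs are finite simple graphs; $\Delta(G)$ is the maximum degree of $G$. For a graph $L$, $\mathrm{ex}(p;L)$ is the maximum number of edges in a graph on $p$ vertices containing no subgraph isomorphic to $L$, and $\mathrm{Ex}(p;L)$ is the set of graphs on $p$ vertices containing no copy of $L$ and having exactly $\mathrm{ex}(p;L)$ edges. *)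

theory Defs
  imports Complex_Main
begin

definition simple_graph :: "'a set \<Rightarrow> 'a set set \<Rightarrow> bool" where
  "simple_graph V E \<longleftrightarrow> finite V \<and> (\<forall>e\<in>E. e \<subseteq> V \<and> card e = 2)"

definition degree :: "'a set set \<Rightarrow> 'a \<Rightarrow> nat" where
  "degree E v = card {e\<in>E. v \<in> e}"

definition max_degree :: "'a set \<Rightarrow> 'a set set \<Rightarrow> nat" where
  "max_degree V E = (if V = {} then 0 else Max (degree E ` V))"

definition adj :: "'a set set \<Rightarrow> 'a \<Rightarrow> 'a \<Rightarrow> bool" where
  "adj E u v \<longleftrightarrow> {u, v} \<in> E"

definition connected_graph :: "'a set \<Rightarrow> 'a set set \<Rightarrow> bool" where
  "connected_graph V E \<longleftrightarrow> V \<noteq> {} \<and> (\<forall>u\<in>V. \<forall>v\<in>V. (adj E)\<^sup>*\<^sup>* u v)"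

definition is_cycle :: "'a set set \<Rightarrow> 'a list \<Rightarrow> bool" where
  "is_cycle E xs \<longleftrightarrow> length xs \<ge> 3 \<and> distinct xs \<and>
     (\<forall>i. Suc i < length xs \<longrightarrow> adj E (xs ! i) (xs ! Suc i)) \<and>
     adj E (last xs) (hd xs)"

definition acyclic_graph :: "'a set set \<Rightarrow> bool" where
  "acyclic_graph E \<longleftrightarrow> \<not> (\<exists>xs. is_cycle E xs)"

definition is_tree :: "'a set \<Rightarrow> 'a set set \<Rightarrow> bool" where
  "is_tree V E \<longleftrightarrow> simple_graph V E \<and> connected_graph V E \<and> acyclic_graph E"

definition contains_copy :: "'a set \<Rightarrow> 'a set set \<Rightarrow> 'b set \<Rightarrow> 'b set set \<Rightarrow> bool" where
  "contains_copy V E W F \<longleftrightarrow>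
     (\<exists>f. inj_on f W \<and> f ` W \<subseteq> V \<and> (\<forall>e\<in>F. f ` e \<in> E))"

text \<open>ex(p;L): maximum number of edges of an L-free graph on p vertices
  (vertex set taken as {0..<p}; the value is isomorphism invariant).\<close>
definition ex_num :: "nat \<Rightarrow> 'b set \<Rightarrow> 'b set set \<Rightarrow> nat" where
  "ex_num p W F = Max {card E | E. simple_graph {0..<p} E \<and> \<not> contains_copy {0..<p} E W F}"

definition in_Ex :: "nat \<Rightarrow> 'b set \<Rightarrow> 'b set set \<Rightarrow> 'a set \<Rightarrow> 'a set set \<Rightarrow> bool" where
  "in_Ex p W F V E \<longleftrightarrow> simple_graph V E \<and> card V = p \<and> \<not> contains_copy V E W F
     \<and> card E = ex_num p W F"

end

theory Submission
  imports Defs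
begin


lemma handshake:
  assumes "finite V" "\<forall>e\<in>E. e \<subseteq> V \<and> card e = 2"
  shows "(\<Sum>v\<in>V. degree E v) = 2 * card E"
proof -
  have fE: "finite E"
    by (meson assms finite_Pow_iff finite_subset subsetI PowI)
  have "(\<Sum>v\<in>V. degree E v) = (\<Sum>v\<in>V. \<Sum>e\<in>E. if v \<in> e then 1 else 0)"
    unfolding degree_def using fE by (simp add: sum.inter_filter[symmetric])
  also have "\<dots> = (\<Sum>e\<in>E. \<Sum>v\<in>V. if v \<in> e then 1 else 0)"
    by (rule sum.swap)
  also have "\<dots> = (\<Sum>e\<in>E. card e)"
  proof (rule sum.cong[OF refl])
    fix e assume "e \<in> E"
    then have "e \<subseteq> V" using assms by auto
    then have "{v\<in>V. v \<in> e} = e" by auto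
    then show "(\<Sum>v\<in>V. if v \<in> e then 1 else 0) = card e"
      using assms(1) by (simp add: sum.inter_filter[symmetric])
  qed
  also have "\<dots> = (\<Sum>e\<in>E. 2)" using assms by simp
  finally show ?thesis by simp
qed

lemma ex_num_ge:
  assumes "simple_graph {0..<p} E0" "\<not> contains_copy {0..<p} E0 W F"
  shows "card E0 \<le> ex_num p W F"
proof -
  have "{card E | E. simple_graph {0..<p} E \<and> \<not> contains_copy {0..<p} E W F}
        \<subseteq> card ` Pow (Pow {0..<p})"
    unfolding simple_graph_def by auto
  then have "finite {card E | E. simple_graph {0..<p} E \<and> \<not> contains_copy {0..<p} E W F}"
    by (rule finite_subset) simp
  then show ?thesis unfolding ex_num_def using assms by (auto intro!: Max_ge)
qed

lemma G_bound:
  assumes "in_Ex p W F V E" "max_degree V E \<le> D"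
  shows "2 * ex_num p W F \<le> p * D"
proof -
  have sg: "simple_graph V E" and cV: "card V = p" and cE: "card E = ex_num p W F"
    using assms unfolding in_Ex_def by auto
  have fV: "finite V" using sg unfolding simple_graph_def by auto
  have "2 * card E = (\<Sum>v\<in>V. degree E v)"
    using handshake[of V E] sg unfolding simple_graph_def by auto
  also have "\<dots> \<le> (\<Sum>v\<in>V. D)"
  proof (rule sum_mono)
    fix v assume v: "v \<in> V"
    then have "degree E v \<le> Max (degree E ` V)" using fV by auto
    also have "\<dots> = max_degree V E" using v unfolding max_degree_def by auto
    finally show "degree E v \<le> D" using assms(2) by simp
  qed
  finally show ?thesis using cV cE by (simp add: mult.commute)
qed

definition hostE :: "nat \<Rightarrow> (nat \<Rightarrow> nat \<Rightarrow> bool) \<Rightarrow> nat set set" where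
  "hostE p R = {{i,j} | i j. i < p \<and> j < p \<and> i \<noteq> j \<and> R i j}"

lemma hostE_simple: "simple_graph {0..<p} (hostE p R)"
  unfolding simple_graph_def hostE_def by auto

lemma hostE_finite: "finite (hostE p R)"
proof -
  have "hostE p R \<subseteq> Pow {0..<p}" unfolding hostE_def by auto
  then show ?thesis by (rule finite_subset) simp
qed

lemma hostE_degree:
  assumes sym: "\<forall>i<p. \<forall>j<p. R i j \<longrightarrow> R j i" and v: "v < p"
  shows "degree (hostE p R) v = card {j. j < p \<and> j \<noteq> v \<and> R v j}"
proof -
  have "bij_betw (\<lambda>j. {v,j}) {j. j < p \<and> j \<noteq> v \<and> R v j} {e \<in> hostE p R. v \<in> e}"
  proof (rule bij_betwI')
    fix x y assume "x \<in> {j. j < p \<and> j \<noteq> v \<and> R v j}" "y \<in> {j. j < p \<and> j \<noteq> v \<and> R v j}"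
    then show "({v, x} = {v, y}) = (x = y)" by (metis doubleton_eq_iff)
  next
    fix x assume x: "x \<in> {j. j < p \<and> j \<noteq> v \<and> R v j}"
    have "{v, x} \<in> hostE p R" unfolding hostE_def using x v by blast
    then show "{v, x} \<in> {e \<in> hostE p R. v \<in> e}" by simp
  next
    fix e assume "e \<in> {e \<in> hostE p R. v \<in> e}"
    then obtain i j where e: "e = {i,j}" "i < p" "j < p" "i \<noteq> j" "R i j" "v \<in> e"
      unfolding hostE_def by blast
    show "\<exists>x\<in>{j. j < p \<and> j \<noteq> v \<and> R v j}. e = {v, x}"
    proof (cases "v = i")
      case True then show ?thesis using e by blast
    next
      case False then have vj: "v = j" using e by blast
      then have "R v i" using e sym by blast
      moreover have "e = {v, i}" using e vj by blast
      ultimately show ?thesis using e vj by blast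
    qed
  qed
  then show ?thesis unfolding degree_def by (rule bij_betw_same_card[symmetric])
qed

lemma hostE_sum:
  assumes sym: "\<forall>i<p. \<forall>j<p. R i j \<longrightarrow> R j i"
  shows "2 * card (hostE p R) = (\<Sum>v<p. card {j. j < p \<and> j \<noteq> v \<and> R v j})"
proof -
  have "2 * card (hostE p R) = (\<Sum>v\<in>{0..<p}. degree (hostE p R) v)"
    using handshake[of "{0..<p}" "hostE p R"] hostE_simple[of p R]
    unfolding simple_graph_def by auto
  also have "\<dots> = (\<Sum>v<p. card {j. j < p \<and> j \<noteq> v \<and> R v j})"
    using hostE_degree[OF sym] by (simp add: atLeast0LessThan)
  finally show ?thesis .
qed

lemma host_free:
  assumes tree: "is_tree W F" and cW: "card W = n" and md: "max_degree W F = n - 4"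
    and n5: "n \<ge> 5"
    and sym: "\<forall>i<p. \<forall>j<p. R i j \<longrightarrow> R j i"
    and blk: "\<forall>i j. R i j \<longrightarrow> b i = b j"
    and cond: "\<forall>v<p. card {j. j < p \<and> b j = b v} < n \<or> card {j. j < p \<and> j \<noteq> v \<and> R v j} < n - 4"
  shows "\<not> contains_copy {0..<p} (hostE p R) W F"
proof
  assume "contains_copy {0..<p} (hostE p R) W F"
  then obtain f where inj: "inj_on f W" and img: "f ` W \<subseteq> {0..<p}"
    and edg: "\<forall>e\<in>F. f ` e \<in> hostE p R" unfolding contains_copy_def by auto
  have sg: "simple_graph W F" and con: "connected_graph W F"
    using tree unfolding is_tree_def by auto
  have fW: "finite W" using sg unfolding simple_graph_def by auto
  have Wne: "W \<noteq> {}" using cW n5 by auto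
  have "max_degree W F \<in> degree F ` W"
    unfolding max_degree_def using Wne fW by auto
  then obtain w0 where w0: "w0 \<in> W" "degree F w0 = n - 4" using md by auto
  define v where "v = f w0"
  have vp: "v < p" using img w0 v_def by auto
  have "degree F w0 \<le> degree (hostE p R) v"
    unfolding degree_def
  proof (rule card_inj_on_le)
    show "inj_on ((`) f) {e \<in> F. w0 \<in> e}"
    proof (rule inj_onI)
      fix x y assume "x \<in> {e \<in> F. w0 \<in> e}" "y \<in> {e \<in> F. w0 \<in> e}" "f ` x = f ` y"
      moreover have "x \<subseteq> W" "y \<subseteq> W" using calculation sg unfolding simple_graph_def by auto
      ultimately show "x = y" using inj_on_image_eq_iff[OF inj, of x y] by simp
    qed
    show "(`) f ` {e \<in> F. w0 \<in> e} \<subseteq> {e \<in> hostE p R. v \<in> e}"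
      using edg v_def by auto
    show "finite {e \<in> hostE p R. v \<in> e}" using hostE_finite by auto
  qed
  then have "card {j. j < p \<and> j \<noteq> v \<and> R v j} \<ge> n - 4"
    using w0 hostE_degree[OF sym vp] by simp
  then have small: "card {j. j < p \<and> b j = b v} < n" using cond vp not_less by blast
  have same: "b (f w) = b v" if "w \<in> W" for w
  proof -
    have "(adj F)\<^sup>*\<^sup>* w0 w" using con w0 that unfolding connected_graph_def by auto
    then show ?thesis
    proof (induction rule: rtranclp_induct)
      case base then show ?case by (simp add: v_def)
    next
      case (step y z)
      then have "{y,z} \<in> F" unfolding adj_def by auto
      then have "f ` {y,z} \<in> hostE p R" using edg by blast
      then have "{f y, f z} \<in> hostE p R" by simp
      then obtain i j where "{f y, f z} = {i,j}" "R i j" unfolding hostE_def by auto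
      then have "b (f y) = b (f z)" using blk by (auto simp: doubleton_eq_iff)
      then show ?case using step by simp
    qed
  qed
  have "f ` W \<subseteq> {j. j < p \<and> b j = b v}" using img same by auto
  then have "card (f ` W) \<le> card {j. j < p \<and> b j = b v}"
    by (rule card_mono[rotated]) simp
  moreover have "card (f ` W) = n" using card_image[OF inj] cW by simp
  ultimately show False using small by simp
qed


lemma div_block:
  fixes c j q :: nat
  assumes "c > 0"
  shows "(j div c = q) \<longleftrightarrow> (q*c \<le> j \<and> j < q*c + c)"
proof
  assume "j div c = q"
  then show "q*c \<le> j \<and> j < q*c + c"
    using div_times_less_eq_dividend[of j c] dividend_less_div_times[OF assms, of j] by auto
next
  assume "q*c \<le> j \<and> j < q*c + c"
  then show "j div c = q" by (intro div_nat_eqI) (auto simp: mult.commute)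
qed

lemma blockset:
  fixes c q P :: nat
  assumes "c > 0"
  shows "{j. j < P \<and> j div c = q} = {q*c..<min P (q*c+c)}"
  using div_block[OF assms] by auto

lemma block_card_le:
  fixes c q P :: nat
  assumes "c > 0"
  shows "card {j. j < P \<and> j div c = q} \<le> c"
  unfolding blockset[OF assms] by simp

lemma block_nb:
  fixes c v P :: nat
  assumes "c > 0" "v < P"
  shows "card {j. j < P \<and> j \<noteq> v \<and> j div c = v div c} = min P (v div c * c + c) - v div c * c - 1"
proof -
  have "{j. j < P \<and> j \<noteq> v \<and> j div c = v div c} = {j. j < P \<and> j div c = v div c} - {v}" by auto
  also have "\<dots> = {v div c * c..<min P (v div c * c+c)} - {v}" unfolding blockset[OF assms(1)] ..
  finally have e: "{j. j < P \<and> j \<noteq> v \<and> j div c = v div c} = {v div c * c..<min P (v div c * c+c)} - {v}" .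
  have "v \<in> {v div c * c..<min P (v div c * c+c)}"
    using div_block[OF assms(1), of v "v div c"] assms by auto
  then show ?thesis unfolding e by simp
qed

definition Dset :: "nat \<Rightarrow> nat \<Rightarrow> nat set" where
  "Dset m t = {x. 1 \<le> x \<and> x \<le> t} \<union> {x. m - t \<le> x \<and> x < m}"

definition Hadj :: "nat \<Rightarrow> nat \<Rightarrow> nat \<Rightarrow> nat \<Rightarrow> nat \<Rightarrow> bool" where
  "Hadj m t h u w \<longleftrightarrow> (w + m - u) mod m \<in> Dset m t \<or> (u < h \<and> w = u + h) \<or> (w < h \<and> u = w + h)"

lemma card_Dset:
  assumes "2*t < m" shows "card (Dset m t) = 2*t"
proof -
  have "Dset m t = {1..t} \<union> {m-t..<m}" unfolding Dset_def by auto
  moreover have "{1..t} \<inter> {m-t..<m} = {}" using assms by auto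
  ultimately show ?thesis using assms by (simp add: card_Un_disjoint)
qed

lemma phi_val:
  fixes u w m :: nat
  assumes "u < m" "w < m"
  shows "(w + m - u) mod m = (if u \<le> w then w - u else w + m - u)"
proof (cases "u \<le> w")
  case True
  then have "w + m - u = (w - u) + m" by simp
  then have "(w + m - u) mod m = (w - u) mod m" by simp
  also have "\<dots> = w - u" using assms by simp
  finally show ?thesis using True by simp
next
  case False
  then show ?thesis using assms by simp
qed

lemma phi_inj:
  fixes u m :: nat
  assumes "u < m"
  shows "inj_on (\<lambda>w. (w + m - u) mod m) {0..<m}"
proof (rule inj_onI)
  fix a b assume a: "a \<in> {0..<m}" and b: "b \<in> {0..<m}" and e: "(a + m - u) mod m = (b + m - u) mod m"
  have am: "a < m" and bm: "b < m" using a b by auto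
  have e': "(if u \<le> a then a - u else a + m - u) = (if u \<le> b then b - u else b + m - u)"
    using e phi_val[OF assms am] phi_val[OF assms bm] by metis
  show "a = b"
  proof (cases "u \<le> a")
    case True note ta = this
    show ?thesis
    proof (cases "u \<le> b")
      case True then show ?thesis using ta e' by simp
    next
      case False then have "a - u = b + m - u" using ta e' by simp
      then show ?thesis using ta False am by linarith
    qed
  next
    case False note ta = this
    show ?thesis
    proof (cases "u \<le> b")
      case True then have "a + m - u = b - u" using ta e' by simp
      then show ?thesis using ta True bm by linarith
    next
      case False then have "a + m - u = b + m - u" using ta e' by simp
      then show ?thesis using assms by linarith
    qed
  qed
qed

lemma phi_image:
  fixes u m :: nat
  assumes "u < m"
  shows "(\<lambda>w. (w + m - u) mod m) ` {0..<m} = {0..<m}"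
proof (rule endo_inj_surj)
  show "(\<lambda>w. (w + m - u) mod m) ` {0..<m} \<subseteq> {0..<m}" using assms by auto
  show "finite {0..<m}" by simp
  show "inj_on (\<lambda>w. (w + m - u) mod m) {0..<m}" by (rule phi_inj[OF assms])
qed

lemma card_circ:
  fixes u m t :: nat
  assumes "u < m" "2*t < m"
  shows "card {w. w < m \<and> (w + m - u) mod m \<in> Dset m t} = 2*t"
proof -
  let ?phi = "\<lambda>w. (w + m - u) mod m"
  let ?S = "{w. w < m \<and> ?phi w \<in> Dset m t}"
  have sub: "?S \<subseteq> {0..<m}" by auto
  have "?phi ` ?S = Dset m t"
  proof
    show "?phi ` ?S \<subseteq> Dset m t" by auto
  next
    show "Dset m t \<subseteq> ?phi ` ?S"
    proof
      fix x assume x: "x \<in> Dset m t"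
      then have "x < m" using assms unfolding Dset_def by auto
      then have "x \<in> ?phi ` {0..<m}" using phi_image[OF assms(1)] by simp
      then obtain w where "w \<in> {0..<m}" "?phi w = x" by blast
      then show "x \<in> ?phi ` ?S" using x by force
    qed
  qed
  moreover have "inj_on ?phi ?S" using inj_on_subset[OF phi_inj[OF assms(1)] sub] .
  ultimately have "card ?S = card (Dset m t)" using card_image by fastforce
  then show ?thesis using card_Dset[OF assms(2)] by simp
qed

lemma Dset_flip:
  assumes "x \<in> Dset m t" "t < m" "x < m"
  shows "m - x \<in> Dset m t"
  using assms unfolding Dset_def by auto

lemma Hadj_sym:
  assumes "u < m" "w < m" "t < m" "Hadj m t h u w"
  shows "Hadj m t h w u"
proof -
  have "(u + m - w) mod m \<in> Dset m t" if x: "(w + m - u) mod m \<in> Dset m t"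
  proof (cases "u \<le> w")
    case True
    have x1: "(w + m - u) mod m = w - u" using phi_val[OF assms(1,2)] True by simp
    have "u \<noteq> w"
    proof
      assume "u = w" then have "(w + m - u) mod m = 0" using x1 by simp
      then show False using x assms(3) unfolding Dset_def by auto
    qed
    then have y1: "(u + m - w) mod m = u + m - w" using phi_val[OF assms(2,1)] True by simp
    have "m - (w - u) = u + m - w" using True assms by simp
    then show ?thesis using Dset_flip[of "w - u" m t] x x1 y1 assms by simp
  next
    case False
    have x1: "(w + m - u) mod m = w + m - u" using phi_val[OF assms(1,2)] False by simp
    have y1: "(u + m - w) mod m = u - w" using phi_val[OF assms(2,1)] False by simp
    have "m - (w + m - u) = u - w" using False assms by simp
    then show ?thesis using Dset_flip[of "w + m - u" m t] x x1 y1 assms False by simp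
  qed
  then show ?thesis using assms(4) unfolding Hadj_def by blast
qed

lemma Hdeg:
  fixes u m t h :: nat
  assumes um: "u < m" and tm: "2*t < m" and hc: "h = 0 \<or> (t < h \<and> h + t < m \<and> 2*h \<le> m)"
  shows "card {w. w < m \<and> w \<noteq> u \<and> Hadj m t h u w} = 2*t + (if u < 2*h then 1 else 0)"
proof -
  define A where "A = {w. w < m \<and> (w + m - u) mod m \<in> Dset m t}"
  define B where "B = {w. w < m \<and> ((u < h \<and> w = u + h) \<or> (w < h \<and> u = w + h))}"
  have u0: "(u + m - u) mod m = 0" by simp
  have notD0: "0 \<notin> Dset m t" using tm unfolding Dset_def by auto
  have Bu: "u \<notin> B" using hc unfolding B_def by auto
  have Au: "u \<notin> A" using u0 notD0 unfolding A_def by auto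
  have eq: "{w. w < m \<and> w \<noteq> u \<and> Hadj m t h u w} = A \<union> B"
    using Au Bu unfolding A_def B_def Hadj_def by blast
  have Bval: "B = (if u < h then {u+h} else if u < 2*h then {u-h} else {})"
  proof (cases "u < h")
    case True
    then have "u + h < m" using hc by auto
    then show ?thesis using True unfolding B_def by auto
  next
    case False
    then show ?thesis unfolding B_def using um by auto
  qed
  have disj: "A \<inter> B = {}"
  proof (cases "h = 0")
    case True then show ?thesis unfolding B_def by auto
  next
    case False
    then have h: "t < h" "h + t < m" "2*h \<le> m" using hc by auto
    show ?thesis
    proof (cases "u < h")
      case True
      then have w: "u + h < m" using h by auto
      have "(u + h + m - u) mod m = h" using phi_val[OF um w] h by simp
      moreover have "h \<notin> Dset m t"
      proof -
        have a2: "h < m - t" using h by linarith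
        show ?thesis unfolding Dset_def using a2 h(1) by simp
      qed
      ultimately show ?thesis using True Bval unfolding A_def by auto
    next
      case False
      show ?thesis
      proof (cases "u < 2*h")
        case True
        have w: "u - h < m" using um by auto
        have nl: "\<not> u \<le> u - h" using False h(1) by linarith
        have "(u - h + m - u) mod m = u - h + m - u" using phi_val[OF um w] nl by simp
        also have "\<dots> = m - h" using False um by linarith
        finally have "(u - h + m - u) mod m = m - h" .
        moreover have "m - h \<notin> Dset m t"
        proof -
          have a1: "t < m - h" using h by linarith
          have a2: "m - h < m - t" using h by linarith
          show ?thesis unfolding Dset_def using a1 a2 by simp
        qed
        ultimately show ?thesis using True False Bval unfolding A_def by auto
      next
        case False2: False
        then show ?thesis using False Bval by auto
      qed
    qed
  qed
  have cA: "card A = 2*t" unfolding A_def using card_circ[OF um tm] .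
  have cB: "card B = (if u < 2*h then 1 else 0)" using Bval by auto
  have fA: "finite A" unfolding A_def by auto
  have fB: "finite B" unfolding B_def by auto
  show ?thesis unfolding eq using card_Un_disjoint[OF fA fB disj] cA cB by simp
qed



lemma hostA:
  fixes n k r p :: nat
  assumes tree: "is_tree W F" and cW: "card W = n" and md: "max_degree W F = n - 4"
    and n10: "n \<ge> 10" and pk: "p = k*(n-1) + r" and rn: "r \<le> n - 2"
  shows "k*(n-1)*(n-2) + r*(r-1) \<le> 2 * ex_num p W F"
proof -
  define c where "c = n - 1"
  have c0: "c > 0" using n10 c_def by simp
  define R where "R = (\<lambda>i j::nat. j div c = i div c)"
  have sym: "\<forall>i<p. \<forall>j<p. R i j \<longrightarrow> R j i" unfolding R_def by simp
  have blk: "\<forall>i j. R i j \<longrightarrow> i div c = j div c" unfolding R_def by simp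
  have cond: "\<forall>v<p. card {j. j < p \<and> j div c = v div c} < n \<or> card {j. j < p \<and> j \<noteq> v \<and> R v j} < n - 4"
  proof (intro allI impI disjI1)
    fix v assume "v < p"
    have "card {j. j < p \<and> j div c = v div c} \<le> c" by (rule block_card_le[OF c0])
    then show "card {j. j < p \<and> j div c = v div c} < n" using c_def n10 by linarith
  qed
  have free: "\<not> contains_copy {0..<p} (hostE p R) W F"
    by (rule host_free[OF tree cW md _ sym blk cond]) (use n10 in simp)
  have le: "card (hostE p R) \<le> ex_num p W F"
    by (rule ex_num_ge[OF hostE_simple free])
  have nbR: "\<And>v. {j. j < p \<and> j \<noteq> v \<and> R v j} = {j. j < p \<and> j \<noteq> v \<and> j div c = v div c}"
    unfolding R_def by simp
  have kp: "k*c \<le> p" using pk c_def by simp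
  have pkc: "p < k*c + c" using pk c_def rn n10 by simp
  have s1: "(\<Sum>v\<in>{0..<k*c}. card {j. j < p \<and> j \<noteq> v \<and> R v j}) = (\<Sum>v\<in>{0..<k*c}. c - 1)"
  proof (rule sum.cong[OF refl])
    fix v assume v: "v \<in> {0..<k*c}"
    then have "v div c < k" using div_less_iff_less_mult[OF c0] by simp
    then have "v div c * c + c \<le> k * c"
      by (metis Suc_leI mult_Suc mult_le_mono1 add.commute)
    then have "min p (v div c * c + c) = v div c * c + c" using kp by simp
    moreover have "v < p" using v kp by simp
    ultimately show "card {j. j < p \<and> j \<noteq> v \<and> R v j} = c - 1"
      unfolding nbR using block_nb[OF c0, of v p] by simp
  qed
  have s2: "(\<Sum>v\<in>{k*c..<p}. card {j. j < p \<and> j \<noteq> v \<and> R v j}) = (\<Sum>v\<in>{k*c..<p}. r - 1)"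
  proof (rule sum.cong[OF refl])
    fix v assume v: "v \<in> {k*c..<p}"
    then have "v div c = k" using div_block[OF c0, of v k] pkc by simp
    moreover have "min p (k * c + c) = p" using pkc by simp
    moreover have "v < p" using v by simp
    ultimately have "card {j. j < p \<and> j \<noteq> v \<and> R v j} = p - k * c - 1"
      unfolding nbR using block_nb[OF c0, of v p] by simp
    also have "\<dots> = r - 1" using pk c_def by simp
    finally show "card {j. j < p \<and> j \<noteq> v \<and> R v j} = r - 1" .
  qed
  have "2 * card (hostE p R) = (\<Sum>v<p. card {j. j < p \<and> j \<noteq> v \<and> R v j})"
    by (rule hostE_sum[OF sym])
  also have "\<dots> = (\<Sum>v\<in>{0..<k*c}. card {j. j < p \<and> j \<noteq> v \<and> R v j})
                 + (\<Sum>v\<in>{k*c..<p}. card {j. j < p \<and> j \<noteq> v \<and> R v j})"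
    using sum.atLeastLessThan_concat[of 0 "k*c" p "\<lambda>v. card {j. j < p \<and> j \<noteq> v \<and> R v j}"] kp
    by (simp add: atLeast0LessThan)
  also have "\<dots> = k*c*(c-1) + r*(r-1)" unfolding s1 s2 using pk c_def by simp
  finally have e: "2 * card (hostE p R) = k*c*(c-1) + r*(r-1)" .
  have "c - 1 = n - 2" using c_def by simp
  then have "k*(n-1)*(n-2) = k*c*(c-1)" using c_def by simp
  then show ?thesis using e le by linarith
qed


lemma hostB:
  fixes n k r p :: nat
  assumes tree: "is_tree W F" and cW: "card W = n" and md: "max_degree W F = n - 4"
    and n10: "n \<ge> 10" and pk: "p = k*(n-1) + r" and rn: "r \<le> n - 2" and k1: "k \<ge> 1"
  shows "(k-1)*(n-1)*(n-2) + (n-1+r)*(n-5) \<le> 2 * ex_num p W F + 1"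
proof -
  define c where "c = n - 1"
  have c0: "c > 0" using n10 c_def by simp
  define base where "base = (k-1)*c"
  define m where "m = n - 1 + r"
  define d where "d = n - 5"
  define t where "t = d div 2"
  define h where "h = (if even d then 0 else m div 2)"
  have pm: "p = base + m" using pk k1 unfolding base_def m_def c_def
    by (metis add.assoc add.commute mult.commute mult_eq_if not_one_le_zero)
  have dm: "d + 4 \<le> m" using n10 unfolding d_def m_def by simp
  have tm: "2*t < m" using dm unfolding t_def by simp
  have tm': "t < m" using tm by simp
  have hc: "h = 0 \<or> (t < h \<and> h + t < m \<and> 2*h \<le> m)"
    using dm unfolding h_def t_def by presburger
  have gle: "2*t + (if u < 2*h then 1 else 0) \<le> d" for u
    unfolding h_def t_def by presburger
  have gge: "d \<le> 2*t + (if u < 2*h then 1 else 0) + (if u = m - 1 then 1 else 0)" if "u < m" for u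
    using that dm unfolding h_def t_def by presburger
  define R where "R = (\<lambda>i j::nat. (i < base \<and> j < base \<and> j div c = i div c) \<or>
                       (base \<le> i \<and> base \<le> j \<and> Hadj m t h (i - base) (j - base)))"
  define b where "b = (\<lambda>i::nat. if i < base then i div c else k)"
  have sym: "\<forall>i<p. \<forall>j<p. R i j \<longrightarrow> R j i"
  proof (intro allI impI)
    fix i j assume i: "i < p" and j: "j < p" and r: "R i j"
    show "R j i"
    proof (cases "i < base")
      case True then show ?thesis using r unfolding R_def by auto
    next
      case False
      then have "base \<le> i \<and> base \<le> j \<and> Hadj m t h (i - base) (j - base)" using r unfolding R_def by auto
      moreover have "i - base < m" "j - base < m" using i j pm dm by linarith+
      ultimately show ?thesis using Hadj_sym[OF _ _ tm'] unfolding R_def by blast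
    qed
  qed
  have blk: "\<forall>i j. R i j \<longrightarrow> b i = b j" unfolding R_def b_def by auto
  have Hset: "{j. j < p \<and> j \<noteq> v \<and> R v j} = (\<lambda>w. w + base) ` {w. w < m \<and> w \<noteq> v - base \<and> Hadj m t h (v - base) w}"
    if "base \<le> v" "v < p" for v
  proof
    show "{j. j < p \<and> j \<noteq> v \<and> R v j} \<subseteq> (\<lambda>w. w + base) ` {w. w < m \<and> w \<noteq> v - base \<and> Hadj m t h (v - base) w}"
    proof
      fix j assume "j \<in> {j. j < p \<and> j \<noteq> v \<and> R v j}"
      then have j: "j < p" "j \<noteq> v" "base \<le> j" "Hadj m t h (v - base) (j - base)"
        using that unfolding R_def by auto
      then have "j - base < m" "j - base \<noteq> v - base" "j = (j - base) + base" using pm that by linarith+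
      then show "j \<in> (\<lambda>w. w + base) ` {w. w < m \<and> w \<noteq> v - base \<and> Hadj m t h (v - base) w}"
        using j(4) by blast
    qed
  next
    show "(\<lambda>w. w + base) ` {w. w < m \<and> w \<noteq> v - base \<and> Hadj m t h (v - base) w} \<subseteq> {j. j < p \<and> j \<noteq> v \<and> R v j}"
    proof
      fix j assume "j \<in> (\<lambda>w. w + base) ` {w. w < m \<and> w \<noteq> v - base \<and> Hadj m t h (v - base) w}"
      then obtain w where w: "j = w + base" "w < m" "w \<noteq> v - base" "Hadj m t h (v - base) w" by blast
      have "j < p" "j \<noteq> v" using w pm that by linarith+
      moreover have "R v j" unfolding R_def using w that by simp
      ultimately show "j \<in> {j. j < p \<and> j \<noteq> v \<and> R v j}" by blast
    qed
  qed
  have nbH: "card {j. j < p \<and> j \<noteq> v \<and> R v j} = 2*t + (if v - base < 2*h then 1 else 0)"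
    if "base \<le> v" "v < p" for v
  proof -
    have "card {j. j < p \<and> j \<noteq> v \<and> R v j} = card {w. w < m \<and> w \<noteq> v - base \<and> Hadj m t h (v - base) w}"
      unfolding Hset[OF that] by (rule card_image) (simp add: inj_on_def)
    also have "\<dots> = 2*t + (if v - base < 2*h then 1 else 0)"
      by (rule Hdeg) (use that pm tm hc in linarith)+
    finally show ?thesis .
  qed
  have cond: "\<forall>v<p. card {j. j < p \<and> b j = b v} < n \<or> card {j. j < p \<and> j \<noteq> v \<and> R v j} < n - 4"
  proof (intro allI impI)
    fix v assume vp: "v < p"
    show "card {j. j < p \<and> b j = b v} < n \<or> card {j. j < p \<and> j \<noteq> v \<and> R v j} < n - 4"
    proof (cases "v < base")
      case True
      then have "v div c < k - 1" using div_less_iff_less_mult[OF c0] unfolding base_def by simp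
      then have "{j. j < p \<and> b j = b v} \<subseteq> {j. j < p \<and> j div c = v div c}"
        using True unfolding b_def by auto
      then have "card {j. j < p \<and> b j = b v} \<le> card {j. j < p \<and> j div c = v div c}"
        by (rule card_mono[rotated]) simp
      also have "\<dots> \<le> c" by (rule block_card_le[OF c0])
      finally show ?thesis using c_def n10 by auto
    next
      case False
      then have "card {j. j < p \<and> j \<noteq> v \<and> R v j} \<le> d" using nbH[of v] vp gle by simp
      then show ?thesis using d_def n10 by auto
    qed
  qed
  have free: "\<not> contains_copy {0..<p} (hostE p R) W F"
    by (rule host_free[OF tree cW md _ sym blk cond]) (use n10 in simp)
  have le: "card (hostE p R) \<le> ex_num p W F"
    by (rule ex_num_ge[OF hostE_simple free])
  have s1: "(\<Sum>v\<in>{0..<base}. card {j. j < p \<and> j \<noteq> v \<and> R v j}) = (\<Sum>v\<in>{0..<base}. c - 1)"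
  proof (rule sum.cong[OF refl])
    fix v assume v: "v \<in> {0..<base}"
    then have "v div c < k - 1" using div_less_iff_less_mult[OF c0] unfolding base_def by simp
    then have "v div c * c + c \<le> base" unfolding base_def
      by (metis Suc_leI mult_Suc mult_le_mono1 add.commute)
    then have mn: "min base (v div c * c + c) = v div c * c + c" by simp
    have vb: "v < base" using v by simp
    have "{j. j < p \<and> j \<noteq> v \<and> R v j} = {j. j < base \<and> j \<noteq> v \<and> j div c = v div c}"
      using vb pm unfolding R_def by auto
    then show "card {j. j < p \<and> j \<noteq> v \<and> R v j} = c - 1"
      using block_nb[OF c0 vb] mn by simp
  qed
  have s2: "(\<Sum>v\<in>{base..<p}. card {j. j < p \<and> j \<noteq> v \<and> R v j})
      = (\<Sum>u\<in>{0..<m}. 2*t + (if u < 2*h then 1 else 0))"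
  proof -
    have "(\<Sum>v\<in>{base..<p}. card {j. j < p \<and> j \<noteq> v \<and> R v j})
        = (\<Sum>v\<in>{base..<p}. 2*t + (if v - base < 2*h then 1 else 0))"
      by (rule sum.cong[OF refl]) (use nbH in auto)
    also have "\<dots> = (\<Sum>u\<in>{0..<m}. 2*t + (if u < 2*h then 1 else 0))"
      using sum.shift_bounds_nat_ivl[of "\<lambda>v. 2*t + (if v - base < 2*h then 1 else 0)" 0 base m] pm
      by (simp add: add.commute)
    finally show ?thesis .
  qed
  have s3: "m * d \<le> (\<Sum>u\<in>{0..<m}. 2*t + (if u < 2*h then 1 else 0)) + 1"
  proof -
    have "m * d = (\<Sum>u\<in>{0..<m}. d)" by simp
    also have "\<dots> \<le> (\<Sum>u\<in>{0..<m}. (2*t + (if u < 2*h then 1 else 0)) + (if u = m - 1 then 1 else 0))"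
      by (rule sum_mono) (use gge in simp)
    also have "\<dots> = (\<Sum>u\<in>{0..<m}. 2*t + (if u < 2*h then 1 else 0)) + (\<Sum>u\<in>{0..<m}. (if u = m - 1 then 1 else 0))"
      by (rule sum.distrib)
    also have "(\<Sum>u\<in>{0..<m}. (if u = m - 1 then 1 else 0)::nat) = 1"
      using dm by (simp add: sum.delta)
    finally show ?thesis by simp
  qed
  have "2 * card (hostE p R) = (\<Sum>v<p. card {j. j < p \<and> j \<noteq> v \<and> R v j})"
    by (rule hostE_sum[OF sym])
  also have "\<dots> = (\<Sum>v\<in>{0..<base}. card {j. j < p \<and> j \<noteq> v \<and> R v j})
                 + (\<Sum>v\<in>{base..<p}. card {j. j < p \<and> j \<noteq> v \<and> R v j})"
    using sum.atLeastLessThan_concat[of 0 base p "\<lambda>v. card {j. j < p \<and> j \<noteq> v \<and> R v j}"] pm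
    by (simp add: atLeast0LessThan)
  finally have e: "2 * card (hostE p R) = base * (c - 1) + (\<Sum>u\<in>{0..<m}. 2*t + (if u < 2*h then 1 else 0))"
    unfolding s1 s2 by simp
  have "c - 1 = n - 2" using c_def by simp
  then have "(k-1)*(n-1)*(n-2) = base * (c-1)" unfolding base_def using c_def by simp
  then show ?thesis using e le s3 unfolding m_def d_def by linarith
qed



lemma arith_main:
  fixes n k r p :: nat
  assumes n10: "n \<ge> 10" and pn: "p \<ge> n" and pk: "p = k*(n-1) + r" and rn: "r \<le> n - 2"
    and A: "k*(n-1)*(n-2) + r*(r-1) \<le> p*(n-4)"
    and B: "k \<ge> 1 \<Longrightarrow> (k-1)*(n-1)*(n-2) + (n-1+r)*(n-5) \<le> p*(n-4) + 1"
  shows "k = 1 \<and> 2*p \<le> r*(n-1-r) \<and> p \<le> 2*n-7"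
proof -
  have k1: "k \<ge> 1"
  proof (rule ccontr)
    assume "\<not> k \<ge> 1" then have "k = 0" by simp
    then show False using pk pn rn n10 by simp
  qed
  define N where "N = int n"
  define K where "K = int k"
  define R where "R = int r"
  define P where "P = int p"
  have NN: "N \<ge> 10" using n10 N_def by simp
  have RR: "0 \<le> R" "R \<le> N - 2" using rn n10 N_def R_def by auto
  have KK: "K \<ge> 1" using k1 K_def by simp
  have PP: "P = K*(N-1) + R" using pk n10 unfolding P_def K_def N_def R_def by (simp add: of_nat_diff)
  have Ai: "K*(N-1)*(N-2) + R*(R-1) \<le> P*(N-4)"
  proof -
    have "int (k*(n-1)*(n-2) + r*(r-1)) \<le> int (p*(n-4))" using A by linarith
    moreover have "int (r*(r-1)) = R*(R-1)"
      by (cases "r = 0") (simp_all add: R_def of_nat_diff)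
    ultimately show ?thesis using n10 unfolding N_def K_def P_def by (simp add: of_nat_diff)
  qed
  have Bi: "(K-1)*(N-1)*(N-2) + (N-1+R)*(N-5) \<le> P*(N-4) + 1"
  proof -
    have e1: "int ((k-1)*(n-1)*(n-2)) = (K-1)*(N-1)*(N-2)"
      using k1 n10 unfolding K_def N_def by (simp add: of_nat_diff)
    have e2: "int ((n-1+r)*(n-5)) = (N-1+R)*(N-5)"
      using n10 unfolding R_def N_def by (simp add: of_nat_diff)
    have e3: "int (p*(n-4)) = P*(N-4)"
      using n10 unfolding P_def N_def by (simp add: of_nat_diff)
    have "int ((k-1)*(n-1)*(n-2)) + int ((n-1+r)*(n-5)) \<le> int (p*(n-4)) + 1" using B k1 by linarith
    then show ?thesis using e1 e2 e3 by simp
  qed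
  have A2: "2*P \<le> R*(N-1-R)"
  proof -
    have "P*(N-4) - (K*(N-1)*(N-2) + R*(R-1)) = R*(N-1-R) - 2*P"
      unfolding PP by (simp add: algebra_simps)
    then show ?thesis using Ai by linarith
  qed
  have B2: "2*((K-1)*(N-1)) \<le> N + R"
  proof -
    have "P*(N-4) + 1 - ((K-1)*(N-1)*(N-2) + (N-1+R)*(N-5)) = N + R - 2*((K-1)*(N-1))"
      unfolding PP by (simp add: algebra_simps)
    then show ?thesis using Bi by linarith
  qed
  have K1: "K = 1"
  proof (rule ccontr)
    assume "K \<noteq> 1"
    then have "K - 1 \<ge> 1" using KK by simp
    then have "(K-1)*(N-1) \<ge> 1*(N-1)" using NN by (intro mult_right_mono) auto
    then have X: "N - 1 \<le> (K-1)*(N-1)" by simp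
    define Y where "Y = (K-1)*(N-1)"
    have "R \<ge> N - 2" using B2 X unfolding Y_def[symmetric] by linarith
    then have "R = N - 2" using RR by simp
    then have "R*(N-1-R) = N - 2" by simp
    moreover have "P \<ge> N - 1" using PP \<open>(K-1)*(N-1) \<ge> 1*(N-1)\<close> RR by (simp add: algebra_simps)
    ultimately show False using A2 NN by linarith
  qed
  then have kk: "k = 1" using K_def by simp
  have P1: "P = N - 1 + R" using PP K1 by simp
  have "P \<le> 2*N - 7"
  proof (rule ccontr)
    assume "\<not> P \<le> 2*N - 7"
    then have "R \<ge> N - 5" using P1 by simp
    then have "N - 1 - R \<in> {1,2,3,4}" using RR by auto
    then show False using A2 P1 RR NN by (auto simp: algebra_simps)
  qed
  then have c3: "p \<le> 2*n - 7" unfolding P_def N_def using n10 by simp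
  have "int (2*p) \<le> int (r*(n-1-r))"
    using A2 rn n10 unfolding P_def R_def N_def by (simp add: of_nat_diff diff_diff_eq)
  then have c2: "2*p \<le> r*(n-1-r)" by linarith
  show ?thesis using kk c2 c3 by simp
qed


theorem lemma2p3:
  fixes p n k r :: nat
    and W :: "'b set" and F :: "'b set set"
    and V :: "'a set" and E :: "'a set set"
  assumes "n \<ge> 10" and "p \<ge> n"
    and "p = k * (n - 1) + r" and "r \<le> n - 2"
    and "is_tree W F" and "card W = n" and "max_degree W F = n - 4"
    and "in_Ex p W F V E"
    and "connected_graph V E" and "max_degree V E \<le> n - 4"
  shows "real p \<le> min ((3 * (real n - 1 + real r) + ((-1) ^ n + (-1) ^ r) / 2) / 2)
                         (real r * (real n - 1 - real r) / 2)
         \<and> p \<le> 2 * n - 7"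
proof -
  have ex: "2 * ex_num p W F \<le> p * (n - 4)" by (rule G_bound[OF assms(8) assms(10)])
  have k1: "k \<ge> 1"
  proof (rule ccontr)
    assume "\<not> k \<ge> 1" then have "k = 0" by simp
    then show False using assms(1-4) by simp
  qed
  have A: "k*(n-1)*(n-2) + r*(r-1) \<le> p*(n-4)"
    using hostA[OF assms(5,6,7,1,3,4)] ex by linarith
  have B: "(k-1)*(n-1)*(n-2) + (n-1+r)*(n-5) \<le> p*(n-4) + 1"
    using hostB[OF assms(5,6,7,1,3,4) k1] ex by linarith
  have res: "k = 1 \<and> 2*p \<le> r*(n-1-r) \<and> p \<le> 2*n-7"
    by (rule arith_main[OF assms(1-4) A B])
  have pr: "real p = real n - 1 + real r" using res assms(3) assms(1) by (simp add: of_nat_diff)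
  have s1: "(-1::real)^n \<ge> -1" by (simp add: minus_one_power_iff)
  have s2: "(-1::real)^r \<ge> -1" by (simp add: minus_one_power_iff)
  have b1: "real p \<le> (3 * (real n - 1 + real r) + ((-1) ^ n + (-1) ^ r) / 2) / 2"
  proof -
    have "real n \<ge> 10" using assms(1) by simp
    moreover have "real r \<ge> 0" by simp
    ultimately have nr: "real n \<ge> 10 \<and> real r \<ge> 0" by simp
    have key: "2 * real p \<le> 3 * (real n - 1 + real r) + (x + y) / 2"
      if "x \<ge> -1" "y \<ge> -1" for x y :: real
    proof -
      have d3: "3 * (real n - 1 + real r) = 3 * real n - 3 + 3 * real r" by (simp add: algebra_simps)
      have d4: "(x + y) / 2 = x / 2 + y / 2" by (simp add: field_simps)
      show ?thesis using that pr nr[THEN conjunct1] nr[THEN conjunct2] d3 d4 by linarith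
    qed
    have "2 * real p \<le> 3 * (real n - 1 + real r) + ((-1) ^ n + (-1) ^ r) / 2"
      by (rule key[OF s1 s2])
    then show ?thesis by simp
  qed
  have "real (2*p) \<le> real (r*(n-1-r))" using res by linarith
  moreover have "real (n-1-r) = real n - 1 - real r" using assms(4) assms(1) by (simp add: of_nat_diff)
  ultimately have "2 * real p \<le> real r * (real n - 1 - real r)" by (simp add: diff_diff_eq)
  then have b2: "real p \<le> real r * (real n - 1 - real r) / 2" by simp
  show ?thesis using b1 b2 res by simp
qed

end
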